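(* For every $\epsilon,n$, every layered graph $G$ over $\Sigma_{in}$ of depth $n$, every $\epsilon$-sensitive $(G,\Sigma_{out})$-code $\mathsf{C}$, and all $x\in\Sigma_{in}^n$ and $w\in\Sigma_{out}^n$, letting $J$ be the set of indices $i$ with $\mathsf{C}(x)[i]=w[i]$, it holds that $\mathsf{CDec}(w[1:i])=v(x[1:i])$ for all but at most $2\epsilon n$ values of $i\in J$.
   Context: A layered graph over alphabet $\Sigma$ of depth $n$ is a directed graph whose vertices are partitioned into layers $0,\dots,n$, with exactly one vertex (the root) in layer $0$, and each vertex in layer $i<n$ has exactly $|\Sigma|$ out-edges to layer $i+1$ labeled by the distinct elements of $\Sigma$ (endpoints need not be distinct). A string $p\in\Sigma_{in}^i$ determines a unique root path ending at vertex $v(p)$ in layer $i$. A $(G,\Sigma_{out})$-code $\mathsf{C}$ assigns an element of $\Sigma_{out}$ to each edge; $\mathsf{C}(p)$ is the label string along $p$. Suffix distance: $\Delta_{sfx}(a,b)=\max_{0\le i\le m-1}\frac{\Delta(a[i+1:m],b[i+1:m])}{m-i}$ for $a,b\in\Sigma^m$, $\Delta$ Hamming distance. $L_i(\mathsf{C},w,\epsilon)=\{v(p):p\in\Sigma_{in}^i,\ \Delta_{sfx}(\mathsf{C}(p),w[1:i])<1-\epsilon\}$, $L(\mathsf{C},w,\epsilon)=\bigcup_{i=1}^nL_i(\mathsf{C},w,\epsilon)$. For $S\subseteq L(\mathsf{C},w,\epsilon)$, a prefix tree of $S$ is a union of paths $p(v)$ ($v\in S$) from the root to $v$, each with $\Delta_{sfx}(\mathsf{C}(p(v)),w[1:|p(v)|])<1-\epsilon$,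 that forms a rooted tree; $\mathcal{PT}(\mathsf{C},w,\epsilon)$ is the set of all such prefix trees of subsets of $L(\mathsf{C},w,\epsilon)$. $agr(\mathsf{C}(H),w(H))$ is the number of edges of $H$ whose $\mathsf{C}$-label equals $w[i]$, $i$ the edge's depth. $\mathsf{C}$ is $\epsilon$-sensitive if for all $w\in\Sigma_{out}^n$ and all $PT\in\mathcal{PT}(\mathsf{C},w,\epsilon)$, $agr(\mathsf{C}(PT),w(PT))\le(1+\epsilon)n$. The decoder $\mathsf{CDec}$, on input $w'\in\Sigma_{out}^i$, outputs the vertex $v$ such that there exists $p\in\Sigma_{in}^i$ with $v(p)=v$ and $\Delta_{sfx}(\mathsf{C}(p),w')<1-\epsilon$ if exactly one such vertex exists, and outputs $\perp$ otherwise. *)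

theory Defs
  imports Complex_Main
begin

text \<open>A layered graph of depth n over the input alphabet (the finite type 'a):
  vertex set V, layer function, r0, and transition function delta; the out-edge of
  vertex v labelled a is identified with the pair (v, a), and its endpoint is delta v a.\<close>

definition layered_graph ::
  "nat \<Rightarrow> 'v set \<Rightarrow> ('v \<Rightarrow> nat) \<Rightarrow> 'v \<Rightarrow> ('v \<Rightarrow> 'a \<Rightarrow> 'v) \<Rightarrow> bool" where
  "layered_graph n V layer r0 delta \<longleftrightarrow>
     r0 \<in> V \<and> layer r0 = 0 \<and>
     (\<forall>v\<in>V. layer v \<le> n) \<and>
     (\<forall>v\<in>V. layer v = 0 \<longrightarrow> v = r0) \<and>
     (\<forall>v\<in>V. layer v < n \<longrightarrow> (\<forall>a. delta v a \<in> V \<and> layer (delta v a) = Suc (layer v)))"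

definition vtx :: "'v \<Rightarrow> ('v \<Rightarrow> 'a \<Rightarrow> 'v) \<Rightarrow> 'a list \<Rightarrow> 'v" where
  "vtx r0 delta p = fold (\<lambda>a v. delta v a) p r0"

definition path_edges :: "'v \<Rightarrow> ('v \<Rightarrow> 'a \<Rightarrow> 'v) \<Rightarrow> 'a list \<Rightarrow> ('v \<times> 'a) set" where
  "path_edges r0 delta p = {(vtx r0 delta (take j p), p ! j) | j. j < length p}"

definition code_str :: "'v \<Rightarrow> ('v \<Rightarrow> 'a \<Rightarrow> 'v) \<Rightarrow> ('v \<Rightarrow> 'a \<Rightarrow> 'b) \<Rightarrow> 'a list \<Rightarrow> 'b list" where
  "code_str r0 delta C p = map (\<lambda>j. C (vtx r0 delta (take j p)) (p ! j)) [0..<length p]"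

definition hamming :: "'b list \<Rightarrow> 'b list \<Rightarrow> nat" where
  "hamming a b = card {j. j < length a \<and> a ! j \<noteq> b ! j}"

text \<open>Suffix distance (0-indexed drop i corresponds to a[i+1:m]); for m = 0 it is 0.\<close>
definition sfx_dist :: "'b list \<Rightarrow> 'b list \<Rightarrow> real" where
  "sfx_dist a b = Max (insert 0
     {real (hamming (drop i a) (drop i b)) / real (length a - i) | i. i < length a})"

definition prefix_tree ::
  "nat \<Rightarrow> 'v \<Rightarrow> ('v \<Rightarrow> 'a \<Rightarrow> 'v) \<Rightarrow> ('v \<Rightarrow> 'a \<Rightarrow> 'b) \<Rightarrow> 'b list \<Rightarrow> real \<Rightarrow> ('v \<times> 'a) set \<Rightarrow> bool" where
  "prefix_tree n r0 delta C w eps H \<longleftrightarrow>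
     (\<exists>P. H = (\<Union>p\<in>P. path_edges r0 delta p) \<and>
          (\<forall>p\<in>P. 1 \<le> length p \<and> length p \<le> n \<and>
                 sfx_dist (code_str r0 delta C p) (take (length p) w) < 1 - eps) \<and>
          (\<forall>e1\<in>H. \<forall>e2\<in>H. delta (fst e1) (snd e1) = delta (fst e2) (snd e2) \<longrightarrow> e1 = e2))"

text \<open>agr(C(H), w(H)): number of edges whose label equals w at the edge's depth
  (the edge out of a vertex in layer l has depth l+1, i.e. w[l+1] = w ! l).\<close>
definition agr :: "('v \<Rightarrow> nat) \<Rightarrow> ('v \<Rightarrow> 'a \<Rightarrow> 'b) \<Rightarrow> 'b list \<Rightarrow> ('v \<times> 'a) set \<Rightarrow> nat" where
  "agr layer C w H = card {e \<in> H. C (fst e) (snd e) = w ! layer (fst e)}"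

definition sensitive ::
  "real \<Rightarrow> nat \<Rightarrow> ('v \<Rightarrow> nat) \<Rightarrow> 'v \<Rightarrow> ('v \<Rightarrow> 'a \<Rightarrow> 'v) \<Rightarrow> ('v \<Rightarrow> 'a \<Rightarrow> 'b) \<Rightarrow> bool" where
  "sensitive eps n layer r0 delta C \<longleftrightarrow>
     (\<forall>w H. length w = n \<longrightarrow> prefix_tree n r0 delta C w eps H \<longrightarrow>
        real (agr layer C w H) \<le> (1 + eps) * real n)"

text \<open>The decoder CDec: None plays the role of \<bottom>.\<close>
definition CDec ::
  "real \<Rightarrow> 'v \<Rightarrow> ('v \<Rightarrow> 'a \<Rightarrow> 'v) \<Rightarrow> ('v \<Rightarrow> 'a \<Rightarrow> 'b) \<Rightarrow> 'b list \<Rightarrow> 'v option" where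
  "CDec eps r0 delta C w' =
     (let S = {vtx r0 delta p | p. length p = length w' \<and>
                 sfx_dist (code_str r0 delta C p) w' < 1 - eps}
      in if (\<exists>!v. v \<in> S) then Some (THE v. v \<in> S) else None)"

end

theory Submission
  imports Defs
begin

lemma vtx_append: "vtx r0 delta (p @ s) = fold (\<lambda>a v. delta v a) s (vtx r0 delta p)"
  by (simp add: vtx_def)

lemma vtx_snoc: "vtx r0 delta (p @ [a]) = delta (vtx r0 delta p) a"
  by (simp add: vtx_def)

lemma vtx_take_Suc: "j < length p \<Longrightarrow> vtx r0 delta (take (Suc j) p) = delta (vtx r0 delta (take j p)) (p ! j)"
  by (simp add: take_Suc_conv_app_nth vtx_snoc)

locale lg =
  fixes n :: nat and V :: "'v set" and layer :: "'v \<Rightarrow> nat" and r0 :: 'v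
    and delta :: "'v \<Rightarrow> 'a::finite \<Rightarrow> 'v" and C :: "'v \<Rightarrow> 'a \<Rightarrow> 'b" and eps :: real
  assumes lgr: "layered_graph n V layer r0 delta" and eps_pos: "0 < eps" and eps_lt: "eps < 1"
begin

abbreviation vt where "vt p \<equiv> vtx r0 delta p"

lemma vt_layer: "length p \<le> n \<Longrightarrow> vt p \<in> V \<and> layer (vt p) = length p"
proof (induction p rule: rev_induct)
  case Nil
  then show ?case using lgr by (simp add: layered_graph_def vtx_def)
next
  case (snoc a p)
  then have "vt p \<in> V" "layer (vt p) = length p" "length p < n" by auto
  then show ?case using lgr by (simp add: layered_graph_def vtx_snoc)
qed

definition agc :: "'b list \<Rightarrow> 'a list \<Rightarrow> nat \<Rightarrow> bool" where
  "agc w q l \<longleftrightarrow> C (vt (take l q)) (q ! l) = w ! l"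

definition A :: "'b list \<Rightarrow> 'a list \<Rightarrow> nat \<Rightarrow> nat \<Rightarrow> nat" where
  "A w q k i = card {l. k \<le> l \<and> l < i \<and> agc w q l}"

definition close :: "'b list \<Rightarrow> 'a list \<Rightarrow> bool" where
  "close w q \<longleftrightarrow> (\<forall>k < length q. real (A w q k (length q)) > eps * real (length q - k))"

lemma A_le: "k \<le> i \<Longrightarrow> A w q k i \<le> i - k"
proof -
  assume "k \<le> i"
  have "{l. k \<le> l \<and> l < i \<and> agc w q l} \<subseteq> {k..<i}" by auto
  then show ?thesis unfolding A_def by (metis card_atLeastLessThan card_mono finite_atLeastLessThan)
qed

lemma hamming_eq:
  assumes "k < length q" "length q \<le> length w"
  shows "hamming (drop k (code_str r0 delta C q)) (drop k (take (length q) w)) = (length q - k) - A w q k (length q)"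
proof -
  let ?N = "length q - k"
  have "{j. j < length (drop k (code_str r0 delta C q)) \<and> drop k (code_str r0 delta C q) ! j \<noteq> drop k (take (length q) w) ! j}
      = {j. j < ?N \<and> \<not> agc w q (k + j)}"
    using assms by (auto simp: code_str_def agc_def)
  also have "card \<dots> = card {l. k \<le> l \<and> l < length q \<and> \<not> agc w q l}"
  proof -
    have "{l. k \<le> l \<and> l < length q \<and> \<not> agc w q l} = (\<lambda>j. k + j) ` {j. j < ?N \<and> \<not> agc w q (k + j)}"
    proof (rule set_eqI, rule iffI)
      fix x assume "x \<in> {l. k \<le> l \<and> l < length q \<and> \<not> agc w q l}"
      then show "x \<in> (\<lambda>j. k + j) ` {j. j < ?N \<and> \<not> agc w q (k + j)}"
        by (intro image_eqI[where x="x - k"]) auto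
    qed auto
    then show ?thesis by (simp add: card_image inj_on_def)
  qed
  also have "\<dots> = ?N - A w q k (length q)"
  proof -
    have u: "{k..<length q} = {l. k \<le> l \<and> l < length q \<and> \<not> agc w q l} \<union> {l. k \<le> l \<and> l < length q \<and> agc w q l}" by auto
    have "card {k..<length q} = card {l. k \<le> l \<and> l < length q \<and> \<not> agc w q l} + card {l. k \<le> l \<and> l < length q \<and> agc w q l}"
      by (subst u, rule card_Un_disjoint) auto
    then show ?thesis by (simp add: A_def)
  qed
  finally show ?thesis by (simp add: hamming_def)
qed

lemma close_iff:
  assumes "length q \<le> length w"
  shows "sfx_dist (code_str r0 delta C q) (take (length q) w) < 1 - eps \<longleftrightarrow> close w q"
proof -
  let ?S = "{real (hamming (drop i (code_str r0 delta C q)) (drop i (take (length q) w))) /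
              real (length (code_str r0 delta C q) - i) | i. i < length (code_str r0 delta C q)}"
  have fin: "finite ?S"
  proof -
    have "?S = (\<lambda>i. real (hamming (drop i (code_str r0 delta C q)) (drop i (take (length q) w))) /
              real (length (code_str r0 delta C q) - i)) ` {..<length (code_str r0 delta C q)}" by blast
    then show ?thesis by simp
  qed
  have lc: "length (code_str r0 delta C q) = length q" by (simp add: code_str_def)
  have "sfx_dist (code_str r0 delta C q) (take (length q) w) < 1 - eps \<longleftrightarrow> (\<forall>s\<in>?S. s < 1 - eps)"
    unfolding sfx_dist_def using fin eps_lt by (simp add: Max_less_iff)
  also have "\<dots> \<longleftrightarrow> close w q"
  proof -
    have "(real (hamming (drop k (code_str r0 delta C q)) (drop k (take (length q) w))) / real (length q - k) < 1 - eps)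
       \<longleftrightarrow> real (A w q k (length q)) > eps * real (length q - k)" if "k < length q" for k
    proof -
      have pos: "real (length q - k) > 0" using that by simp
      have le: "A w q k (length q) \<le> length q - k" using A_le that by simp
      have "real (hamming (drop k (code_str r0 delta C q)) (drop k (take (length q) w))) = real (length q - k) - real (A w q k (length q))"
        using hamming_eq[OF that assms] le by simp
      moreover have "\<And>h N a::real. N > 0 \<Longrightarrow> h = N - a \<Longrightarrow> (h / N < 1 - eps \<longleftrightarrow> a > eps * N)"
      proof -
        fix h N a :: real assume "N > 0" "h = N - a"
        then have "h / N < 1 - eps \<longleftrightarrow> h < (1 - eps) * N" by (simp add: divide_less_eq)
        moreover have "(1 - eps) * N = N - eps * N" by (simp add: left_diff_distrib)
        ultimately show "h / N < 1 - eps \<longleftrightarrow> a > eps * N" using \<open>h = N - a\<close> by linarith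
      qed
      ultimately show ?thesis using pos by blast
    qed
    then show ?thesis unfolding close_def lc by auto
  qed
  finally show ?thesis .
qed

lemma agc_cong_take: "l < m \<Longrightarrow> agc w (take m q) l = agc w q l"
  by (simp add: agc_def min_def)

lemma agc_app: "l < length p \<Longrightarrow> agc w (p @ s) l = agc w p l"
  by (simp add: agc_def nth_append)

lemma agc_app2: "length p = length p' \<Longrightarrow> vt p = vt p' \<Longrightarrow> agc w (p @ s) (length p + j) = agc w (p' @ s) (length p + j)"
  by (simp add: agc_def vtx_append nth_append)

lemma A_cong: "(\<And>l. l < i \<Longrightarrow> agc w q l = agc w q' l) \<Longrightarrow> A w q k i = A w q' k i"
  unfolding A_def by (rule arg_cong[where f=card]) auto

lemma A_split: "k \<le> m \<Longrightarrow> m \<le> i \<Longrightarrow> A w q k i = A w q k m + A w q m i"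
proof -
  assume a: "k \<le> m" "m \<le> i"
  have "{l. k \<le> l \<and> l < i \<and> agc w q l} = {l. k \<le> l \<and> l < m \<and> agc w q l} \<union> {l. m \<le> l \<and> l < i \<and> agc w q l}"
    using a by auto
  moreover have "card ({l. k \<le> l \<and> l < m \<and> agc w q l} \<union> {l. m \<le> l \<and> l < i \<and> agc w q l})
     = card {l. k \<le> l \<and> l < m \<and> agc w q l} + card {l. m \<le> l \<and> l < i \<and> agc w q l}"
  proof (rule card_Un_disjoint)
    show "finite {l. k \<le> l \<and> l < m \<and> agc w q l}" by (rule finite_subset[of _ "{..<m}"]) auto
    show "finite {l. m \<le> l \<and> l < i \<and> agc w q l}" by (rule finite_subset[of _ "{..<i}"]) auto
  qed auto
  ultimately show ?thesis unfolding A_def by simp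
qed

lemma A_single: "A w q j (Suc j) = (if agc w q j then 1 else 0)"
proof -
  have e: "\<And>x. j \<le> x \<Longrightarrow> x < Suc j \<Longrightarrow> x = j" by simp
  have "{l. j \<le> l \<and> l < Suc j \<and> agc w q l} = {l. l = j \<and> agc w q l}"
    by (auto simp add: less_Suc_eq_le)
  also have "\<dots> = (if agc w q j then {j} else {})" by auto
  finally have "{l. j \<le> l \<and> l < Suc j \<and> agc w q l} = (if agc w q j then {j} else {})" .
  then show ?thesis unfolding A_def by simp
qed

primrec psin :: "'b list \<Rightarrow> 'a list \<Rightarrow> nat \<Rightarrow> real" where
  "psin w q 0 = 0"
| "psin w q (Suc j) = min 0 (psin w q j) + (if agc w q j then 1 else 0) - eps"

lemma psin_cong: "(\<And>l. l < j \<Longrightarrow> agc w q l = agc w q' l) \<Longrightarrow> psin w q j = psin w q' j"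
  by (induction j) auto

lemma psin_char:
  "j \<ge> 1 \<Longrightarrow> (\<forall>k<j. psin w q j \<le> real (A w q k j) - eps * real (j - k)) \<and>
     (\<exists>k<j. psin w q j = real (A w q k j) - eps * real (j - k))"
proof (induction j)
  case 0 then show ?case by simp
next
  case (Suc j)
  have ag: "real (A w q j (Suc j)) = (if agc w q j then 1 else 0)" by (simp add: A_single)
  show ?case
  proof (cases "j = 0")
    case True
    then show ?thesis using ag by auto
  next
    case False
    then have IH: "(\<forall>k<j. psin w q j \<le> real (A w q k j) - eps * real (j - k)) \<and>
     (\<exists>k<j. psin w q j = real (A w q k j) - eps * real (j - k))" using Suc by simp
    have spl: "\<And>k. k < j \<Longrightarrow> real (A w q k (Suc j)) = real (A w q k j) + (if agc w q j then 1 else 0)"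
    proof -
      fix k assume "k < j"
      then have "A w q k (Suc j) = A w q k j + A w q j (Suc j)" by (intro A_split) auto
      then show "real (A w q k (Suc j)) = real (A w q k j) + (if agc w q j then 1 else 0)" using ag by simp
    qed
    have part1: "\<forall>k<Suc j. psin w q (Suc j) \<le> real (A w q k (Suc j)) - eps * real (Suc j - k)"
    proof (intro allI impI)
      fix k assume "k < Suc j"
      then consider "k = j" | "k < j" by linarith
      then show "psin w q (Suc j) \<le> real (A w q k (Suc j)) - eps * real (Suc j - k)"
      proof cases
        case 1 then show ?thesis using ag by simp
      next
        case 2
        then have "psin w q j \<le> real (A w q k j) - eps * real (j - k)" using IH by blast
        moreover have "real (Suc j - k) = real (j - k) + 1" using 2 by simp
        ultimately show ?thesis using spl[OF 2] by (simp add: algebra_simps)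
      qed
    qed
    have part2: "\<exists>k<Suc j. psin w q (Suc j) = real (A w q k (Suc j)) - eps * real (Suc j - k)"
    proof (cases "psin w q j \<ge> 0")
      case True
      then show ?thesis using ag by (intro exI[where x=j]) simp
    next
      case False
      obtain k where k: "k < j" "psin w q j = real (A w q k j) - eps * real (j - k)" using IH by blast
      have "real (Suc j - k) = real (j - k) + 1" using k by simp
      then show ?thesis using False k spl[OF k(1)]
        by (intro exI[where x=k]) (simp add: algebra_simps)
    qed
    show ?thesis using part1 part2 by blast
  qed
qed

lemma close_psin: "length q \<ge> 1 \<Longrightarrow> close w q \<longleftrightarrow> psin w q (length q) > 0"
proof -
  assume l: "length q \<ge> 1"
  note c = psin_char[OF l, of w q]
  show ?thesis
  proof
    assume cl: "close w q"
    obtain k where k: "k < length q" "psin w q (length q) = real (A w q k (length q)) - eps * real (length q - k)"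
      using c by blast
    have "real (A w q k (length q)) > eps * real (length q - k)" using cl k(1) unfolding close_def by blast
    then show "psin w q (length q) > 0" using k(2) by linarith
  next
    assume p: "psin w q (length q) > 0"
    show "close w q" unfolding close_def
    proof (intro allI impI)
      fix k assume "k < length q"
      then have "psin w q (length q) \<le> real (A w q k (length q)) - eps * real (length q - k)" using c by blast
      then show "real (A w q k (length q)) > eps * real (length q - k)" using p by linarith
    qed
  qed
qed

lemma psin_app: "psin w (p @ s) (length p) = psin w p (length p)"
  by (rule psin_cong) (simp add: agc_app)

lemma psin_mono:
  assumes "length p = length p'" "vt p = vt p'" "psin w p (length p) \<le> psin w p' (length p')"
  shows "psin w (p @ s) (length p + j) \<le> psin w (p' @ s) (length p + j)"
proof (induction j)
  case 0 then show ?case using assms psin_app[of w p s] psin_app[of w p' s] by simp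
next
  case (Suc j)
  then show ?case using agc_app2[OF assms(1,2), of w s j] by simp
qed

declare psin.simps[simp del]

definition R :: "nat \<Rightarrow> 'v set" where
  "R i = {vt p | p. length p = i}"

lemma finite_R: "finite (R i)"
proof -
  have "R i = vt ` {p. set p \<subseteq> UNIV \<and> length p = i}" unfolding R_def by auto
  then show ?thesis using finite_lists_length_eq[of "UNIV :: 'a set" i] by simp
qed

primrec best :: "'b list \<Rightarrow> nat \<Rightarrow> 'v \<Rightarrow> 'a list" where
  "best w 0 t = []"
| "best w (Suc i) t = (SOME q. q \<in> {best w i u @ [a] | u a. u \<in> R i \<and> delta u a = t} \<and>
      (\<forall>q' \<in> {best w i u @ [a] | u a. u \<in> R i \<and> delta u a = t}. psin w q' (Suc i) \<le> psin w q (Suc i)))"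

declare best.simps(2)[simp del]

lemma best_Suc_spec:
  assumes "t \<in> R (Suc i)"
  shows "best w (Suc i) t \<in> {best w i u @ [a] | u a. u \<in> R i \<and> delta u a = t} \<and>
      (\<forall>q' \<in> {best w i u @ [a] | u a. u \<in> R i \<and> delta u a = t}. psin w q' (Suc i) \<le> psin w (best w (Suc i) t) (Suc i))"
proof -
  let ?Q = "{best w i u @ [a] | u a. u \<in> R i \<and> delta u a = t}"
  have fin: "finite ?Q"
  proof -
    have "?Q \<subseteq> (\<lambda>(u, a). best w i u @ [a]) ` (R i \<times> UNIV)" by auto
    then show ?thesis by (rule finite_subset) (intro finite_imageI finite_cartesian_product finite_R finite_UNIV)
  qed
  obtain p where p: "length p = Suc i" "vt p = t" using assms unfolding R_def by auto
  then obtain p0 a where "p = p0 @ [a]" by (cases p rule: rev_cases) auto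
  then have "best w i (vt p0) @ [a] \<in> ?Q" using p unfolding R_def by (auto simp: vtx_snoc)
  then have ne: "?Q \<noteq> {}" by blast
  let ?f = "\<lambda>q. psin w q (Suc i)"
  have "Max (?f ` ?Q) \<in> ?f ` ?Q" using fin ne by simp
  then obtain q where q: "Max (?f ` ?Q) = ?f q" "q \<in> ?Q" by (rule imageE)
  have "\<forall>q'\<in>?Q. ?f q' \<le> ?f q"
  proof
    fix q' assume "q' \<in> ?Q"
    then have "?f q' \<le> Max (?f ` ?Q)" using fin by (intro Max_ge) auto
    then show "?f q' \<le> ?f q" using q(1) by simp
  qed
  then have "\<exists>q. q \<in> ?Q \<and> (\<forall>q'\<in>?Q. ?f q' \<le> ?f q)" using q by blast
  then show ?thesis unfolding best.simps by (rule someI_ex)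
qed

lemma best_props:
  "t \<in> R i \<Longrightarrow> length (best w i t) = i \<and> vt (best w i t) = t \<and>
     (\<forall>p. length p = i \<and> vt p = t \<longrightarrow> psin w p i \<le> psin w (best w i t) i)"
proof (induction i arbitrary: t)
  case 0
  then show ?case by (auto simp: R_def vtx_def)
next
  case (Suc i)
  note sp = best_Suc_spec[OF Suc.prems, of w]
  from conjunct1[OF sp] obtain u a where ua: "u \<in> R i" "delta u a = t" "best w (Suc i) t = best w i u @ [a]" by auto
  have IHu: "length (best w i u) = i" "vt (best w i u) = u" using Suc.IH[OF ua(1)] by auto
  have opt: "psin w p (Suc i) \<le> psin w (best w (Suc i) t) (Suc i)" if lp: "length p = Suc i" and vp: "vt p = t" for p
  proof -
    obtain p0 b where pb: "p = p0 @ [b]" using lp by (cases p rule: rev_cases) auto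
    have l0: "length p0 = i" using that pb by simp
    have u0: "vt p0 \<in> R i" using l0 unfolding R_def by auto
    have IH0: "length (best w i (vt p0)) = i" "vt (best w i (vt p0)) = vt p0"
        "psin w p0 i \<le> psin w (best w i (vt p0)) i"
      using Suc.IH[OF u0] l0 by auto
    have "psin w (p0 @ [b]) (length p0 + 1) \<le> psin w (best w i (vt p0) @ [b]) (length p0 + 1)"
      using psin_mono[of p0 "best w i (vt p0)" w "[b]" 1] IH0 l0 by simp
    also have "\<dots> \<le> psin w (best w (Suc i) t) (Suc i)"
    proof -
      have "delta (vt p0) b = t" using that(2) pb by (simp add: vtx_snoc)
      then have "best w i (vt p0) @ [b] \<in> {best w i u @ [a] | u a. u \<in> R i \<and> delta u a = t}" using u0 by blast
      then show ?thesis using sp l0 by simp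
    qed
    finally show ?thesis using pb l0 by simp
  qed
  show ?case using ua IHu opt by (simp add: vtx_snoc)
qed

lemma best_struct: "t \<in> R (Suc i) \<Longrightarrow> \<exists>u a. u \<in> R i \<and> delta u a = t \<and> best w (Suc i) t = best w i u @ [a]"
proof -
  assume "t \<in> R (Suc i)"
  from conjunct1[OF best_Suc_spec[OF this, of w]] show ?thesis by auto
qed

lemma R_take: "j \<le> length p \<Longrightarrow> vt (take j p) \<in> R j"
  unfolding R_def by (auto intro!: exI[where x="take j p"])

lemma best_prefix: "t \<in> R i \<Longrightarrow> j \<le> i \<Longrightarrow> take j (best w i t) = best w j (vt (take j (best w i t)))"
proof (induction i arbitrary: t j)
  case 0 then show ?case by simp
next
  case (Suc i)
  obtain u a where ua: "u \<in> R i" "delta u a = t" "best w (Suc i) t = best w i u @ [a]"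
    using best_struct[OF Suc.prems(1)] by blast
  have lu: "length (best w i u) = i" using best_props[OF ua(1)] by simp
  show ?case
  proof (cases "j = Suc i")
    case True
    then show ?thesis using best_props[OF Suc.prems(1), of w] by simp
  next
    case False
    then have "j \<le> i" using Suc.prems by simp
    then have "take j (best w (Suc i) t) = take j (best w i u)" using ua(3) lu by simp
    then show ?thesis using Suc.IH[OF ua(1) \<open>j \<le> i\<close>] by simp
  qed
qed

lemma best_close: "length p \<ge> 1 \<Longrightarrow> close w p \<Longrightarrow> close w (best w (length p) (vt p))"
proof -
  assume l: "length p \<ge> 1" and c: "close w p"
  have r: "vt p \<in> R (length p)" unfolding R_def by auto
  note bp = best_props[OF r, of w]
  have "psin w p (length p) > 0" using close_psin[OF l] c by simp
  then have "psin w (best w (length p) (vt p)) (length p) > 0" using bp by fastforce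
  then show ?thesis using close_psin[of "best w (length p) (vt p)"] bp l by simp
qed

lemma close_gain: "(\<And>l. l < length q \<Longrightarrow> agc w q l \<Longrightarrow> agc w' q l) \<Longrightarrow> close w q \<Longrightarrow> close w' q"
proof -
  assume g: "\<And>l. l < length q \<Longrightarrow> agc w q l \<Longrightarrow> agc w' q l" and c: "close w q"
  have "A w q k (length q) \<le> A w' q k (length q)" for k
    unfolding A_def by (rule card_mono) (auto intro: finite_subset[of _ "{..<length q}"] g)
  then show ?thesis using c unfolding close_def by (meson of_nat_le_iff less_le_trans)
qed

lemma close_last: "close w q \<Longrightarrow> j = length q - 1 \<Longrightarrow> length q \<ge> 1 \<Longrightarrow> agc w q j"
proof -
  assume c: "close w q" and j: "j = length q - 1" and l: "length q \<ge> 1"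
  then have "real (A w q j (Suc j)) > eps * real (Suc j - j)" unfolding close_def
    by (metis Suc_diff_1 diff_less less_numeral_extra(1) order_less_le_trans)
  then have "real (A w q j (Suc j)) > 0" using eps_pos by simp
  then show ?thesis by (simp add: A_single split: if_splits)
qed

definition Multi :: "'b list \<Rightarrow> nat set" where
  "Multi w = {i \<in> {1..n}. \<exists>p p'. length p = i \<and> length p' = i \<and> close w p \<and> close w p' \<and> vt p \<noteq> vt p'}"

lemma path_edges_finite: "finite (path_edges r0 delta s)"
proof -
  have "path_edges r0 delta s = (\<lambda>j. (vt (take j s), s ! j)) ` {..<length s}"
    unfolding path_edges_def by auto
  then show ?thesis by simp
qed

lemma multi_bound:
  assumes sens: "sensitive eps n layer r0 delta C" and lw: "length w = n"
  shows "real (card (Multi w)) \<le> eps * real n"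
proof (cases "{p. 1 \<le> length p \<and> length p \<le> n \<and> close w p} = {}")
  case True
  then have "Multi w = {}" unfolding Multi_def by fastforce
  then show ?thesis using eps_pos by simp
next
  case False
  define CP where "CP = {p. 1 \<le> length p \<and> length p \<le> n \<and> close w p}"
  have finCP: "finite CP"
    by (rule finite_subset[OF _ finite_lists_length_le[OF finite_UNIV, of n]]) (auto simp: CP_def)
  have neCP: "CP \<noteq> {}" using False CP_def by simp
  define m where "m = Max (length ` CP)"
  have "m \<in> length ` CP" unfolding m_def using finCP neCP by simp
  then obtain pm where pm: "pm \<in> CP" "length pm = m" by auto
  have m_ge: "\<And>p. p \<in> CP \<Longrightarrow> length p \<le> m" unfolding m_def using finCP by simp
  have m1: "1 \<le> m" "m \<le> n" using pm CP_def by auto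
  define b0 where "b0 = best w m (vt pm)"
  have t0R: "vt pm \<in> R m" using pm unfolding R_def by auto
  have b0l: "length b0 = m" using best_props[OF t0R] b0_def by simp
  have b0c: "close w b0" using best_close[of pm w] pm CP_def b0_def by simp
  define P0 where "P0 = (\<lambda>p. best w (length p) (vt p)) ` CP"
  have b0P: "b0 \<in> P0" using pm b0_def P0_def by auto
  have finP0: "finite P0" using finCP P0_def by simp
  have P0_props: "\<And>q. q \<in> P0 \<Longrightarrow> 1 \<le> length q \<and> length q \<le> m \<and> close w q \<and> (\<exists>t. t \<in> R (length q) \<and> q = best w (length q) t)"
  proof -
    fix q assume "q \<in> P0"
    then obtain p where p: "p \<in> CP" "q = best w (length p) (vt p)" using P0_def by auto
    have r: "vt p \<in> R (length p)" unfolding R_def by auto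
    have lq: "length q = length p" using best_props[OF r] p by simp
    show "1 \<le> length q \<and> length q \<le> m \<and> close w q \<and> (\<exists>t. t \<in> R (length q) \<and> q = best w (length q) t)"
      using lq p m_ge[OF p(1)] best_close[of p w] r CP_def by auto
  qed
  define a0 where "a0 = (undefined :: 'a)"
  define z where "z = b0 @ replicate (n - m) a0"
  have zl: "length z = n" using z_def b0l m1 by simp
  define c where "c = code_str r0 delta C z"
  define w' where "w' = map (\<lambda>j. if \<exists>q\<in>P0. j < length q \<and> agc w q j then w ! j else c ! j) [0..<n]"
  have w'l: "length w' = n" using w'_def by simp
  have w'n: "\<And>j. j < n \<Longrightarrow> w' ! j = (if \<exists>q\<in>P0. j < length q \<and> agc w q j then w ! j else c ! j)"
    using w'_def by auto
  have gain: "\<And>q l. q \<in> P0 \<Longrightarrow> l < length q \<Longrightarrow> agc w q l \<Longrightarrow> agc w' q l"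
  proof -
    fix q l assume q: "q \<in> P0" "l < length q" "agc w q l"
    then have "l < n" using P0_props[OF q(1)] m1 by linarith
    then have "w' ! l = w ! l" using w'n q by auto
    then show "agc w' q l" using q(3) unfolding agc_def by simp
  qed
  have P0c': "\<And>q. q \<in> P0 \<Longrightarrow> close w' q"
    using gain P0_props close_gain by blast
  have zc_nth: "\<And>j. j < n \<Longrightarrow> c ! j = C (vt (take j z)) (z ! j)"
    using zl c_def by (simp add: code_str_def)
  have z_ag_hi: "\<And>l. m \<le> l \<Longrightarrow> l < n \<Longrightarrow> agc w' z l"
  proof -
    fix l assume l: "m \<le> l" "l < n"
    have nq: "\<not> (\<exists>q\<in>P0. l < length q \<and> agc w q l)" using P0_props l by fastforce
    have "w' ! l = c ! l" by (subst w'n[OF l(2)]) (rule if_not_P[OF nq])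
    then show "agc w' z l" using zc_nth[OF l(2)] unfolding agc_def by simp
  qed
  have z_ag_lo: "\<And>l. l < m \<Longrightarrow> agc w z l = agc w b0 l"
    using agc_app b0l z_def by simp
  have z_ag_lo': "\<And>l. l < m \<Longrightarrow> agc w' z l = agc w' b0 l"
    using agc_app b0l z_def by simp
  have zc': "close w' z" unfolding close_def zl
  proof (intro allI impI)
    fix k assume k: "k < n"
    have all: "A w' z k' n = n - k'" if "m \<le> k'" "k' \<le> n" for k'
    proof -
      have "{l. k' \<le> l \<and> l < n \<and> agc w' z l} = {k'..<n}" using z_ag_hi that by auto
      then show ?thesis unfolding A_def by simp
    qed
    show "eps * real (n - k) < real (A w' z k n)"
    proof (cases "m \<le> k")
      case True
      then have "real (A w' z k n) = real (n - k)" using all k by simp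
      moreover have "real (n - k) > 0" using k by simp
      ultimately show ?thesis using eps_lt by (simp add: mult_less_cancel_right2)
    next
      case False
      then have km: "k < m" by simp
      have s: "A w' z k n = A w' z k m + A w' z m n" using km m1 by (intro A_split) auto
      have gb: "\<And>l. l < m \<Longrightarrow> agc w b0 l \<Longrightarrow> agc w' b0 l" using gain[OF b0P] b0l by simp
      have "A w z k m \<le> A w' z k m"
        unfolding A_def
        by (rule card_mono) (auto intro: finite_subset[of _ "{..<m}"] gb simp: z_ag_lo z_ag_lo')
      moreover have "A w z k m = A w b0 k m" using z_ag_lo by (intro A_cong) simp
      moreover have "real (A w b0 k m) > eps * real (m - k)" using b0c km b0l unfolding close_def by simp
      ultimately have "real (A w' z k m) > eps * real (m - k)" by linarith
      moreover have "real (A w' z m n) = real (n - m)" using all m1 by simp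
      moreover have "eps * real (n - m) \<le> real (n - m)" using eps_lt eps_pos by (intro mult_left_le_one_le) auto
      moreover have "eps * real (n - k) = eps * real (m - k) + eps * real (n - m)"
        using km m1 by (simp add: of_nat_diff algebra_simps)
      ultimately show ?thesis using s by simp
    qed
  qed
  define PP where "PP = insert z P0"
  define H where "H = (\<Union>s\<in>PP. path_edges r0 delta s)"
  have PP_len: "\<And>s. s \<in> PP \<Longrightarrow> 1 \<le> length s \<and> length s \<le> n"
    using P0_props m1 zl PP_def by fastforce
  have PP_close: "\<And>s. s \<in> PP \<Longrightarrow> close w' s" using P0c' zc' PP_def by auto
  have canon: "\<And>s j. s \<in> PP \<Longrightarrow> j < length s \<Longrightarrow>
      take (Suc j) s = (if j < m then best w (Suc j) (vt (take (Suc j) s)) else take (Suc j) z)"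
  proof -
    fix s j assume s: "s \<in> PP" and j: "j < length s"
    show "take (Suc j) s = (if j < m then best w (Suc j) (vt (take (Suc j) s)) else take (Suc j) z)"
    proof (cases "s = z")
      case True
      show ?thesis
      proof (cases "j < m")
        case jm: True
        have "take (Suc j) z = take (Suc j) b0" using z_def b0l jm by simp
        moreover have "take (Suc j) b0 = best w (Suc j) (vt (take (Suc j) b0))"
          using best_prefix[OF t0R, of "Suc j" w] jm b0_def by simp
        ultimately show ?thesis using True jm by simp
      qed (use True in simp)
    next
      case False
      then have q: "s \<in> P0" using s PP_def by simp
      obtain t where t: "t \<in> R (length s)" "s = best w (length s) t" using P0_props[OF q] by blast
      have jm: "j < m" using j P0_props[OF q] by linarith
      have "take (Suc j) s = best w (Suc j) (vt (take (Suc j) s))"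
        using best_prefix[OF t(1), of "Suc j" w] j t(2) by simp
      then show ?thesis using jm by simp
    qed
  qed
  have edge_form: "\<And>e. e \<in> H \<Longrightarrow> \<exists>s j. s \<in> PP \<and> j < length s \<and> e = (vt (take j s), s ! j)"
    unfolding H_def path_edges_def by blast
  have tree: "\<forall>e1\<in>H. \<forall>e2\<in>H. delta (fst e1) (snd e1) = delta (fst e2) (snd e2) \<longrightarrow> e1 = e2"
  proof (intro ballI impI)
    fix e1 e2 assume e1: "e1 \<in> H" and e2: "e2 \<in> H" and hd: "delta (fst e1) (snd e1) = delta (fst e2) (snd e2)"
    obtain s1 j1 where s1: "s1 \<in> PP" "j1 < length s1" "e1 = (vt (take j1 s1), s1 ! j1)" using edge_form[OF e1] by blast
    obtain s2 j2 where s2: "s2 \<in> PP" "j2 < length s2" "e2 = (vt (take j2 s2), s2 ! j2)" using edge_form[OF e2] by blast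
    have h1: "delta (fst e1) (snd e1) = vt (take (Suc j1) s1)" using s1 vtx_take_Suc[OF s1(2), of r0 delta] by simp
    have h2: "delta (fst e2) (snd e2) = vt (take (Suc j2) s2)" using s2 vtx_take_Suc[OF s2(2), of r0 delta] by simp
    have L1: "layer (vt (take (Suc j1) s1)) = Suc j1" using vt_layer[of "take (Suc j1) s1"] PP_len[OF s1(1)] s1(2) by simp
    have L2: "layer (vt (take (Suc j2) s2)) = Suc j2" using vt_layer[of "take (Suc j2) s2"] PP_len[OF s2(1)] s2(2) by simp
    have hh: "vt (take (Suc j1) s1) = vt (take (Suc j2) s2)" unfolding h1[symmetric] h2[symmetric] by (rule hd)
    have jj: "j1 = j2" using L1 L2 hh by (metis Suc_inject)
    have "take (Suc j1) s1 = (if j1 < m then best w (Suc j1) (vt (take (Suc j1) s1)) else take (Suc j1) z)"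
      by (rule canon[OF s1(1,2)])
    also have "\<dots> = (if j2 < m then best w (Suc j2) (vt (take (Suc j2) s2)) else take (Suc j2) z)"
      using jj hh by simp
    also have "\<dots> = take (Suc j2) s2" by (rule canon[OF s2(1,2), symmetric])
    finally have tt: "take (Suc j1) s1 = take (Suc j1) s2" using jj by simp
    have "e1 = (vt (take j1 (take (Suc j1) s1)), take (Suc j1) s1 ! j1)" using s1 by simp
    also have "\<dots> = (vt (take j1 (take (Suc j1) s2)), take (Suc j1) s2 ! j1)" using tt by simp
    also have "\<dots> = e2" using s2 jj by simp
    finally show "e1 = e2" .
  qed
  have pt: "prefix_tree n r0 delta C w' eps H"
    unfolding prefix_tree_def
  proof (intro exI[where x=PP] conjI)
    show "H = (\<Union>p\<in>PP. path_edges r0 delta p)" using H_def by simp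
    show "\<forall>p\<in>PP. 1 \<le> length p \<and> length p \<le> n \<and> sfx_dist (code_str r0 delta C p) (take (length p) w') < 1 - eps"
      using PP_len PP_close close_iff w'l by simp
    show "\<forall>e1\<in>H. \<forall>e2\<in>H. delta (fst e1) (snd e1) = delta (fst e2) (snd e2) \<longrightarrow> e1 = e2" by (rule tree)
  qed
  have upper: "real (agr layer C w' H) \<le> (1 + eps) * real n" using sens pt w'l unfolding sensitive_def by blast
  define AG where "AG = {e \<in> H. C (fst e) (snd e) = w' ! layer (fst e)}"
  have finPP: "finite PP" using finP0 PP_def by simp
  have finH: "finite H" using finPP path_edges_finite H_def by simp
  have finAG: "finite AG" using finH AG_def by simp
  define E where "E j = {e \<in> AG. layer (fst e) = j}" for j
  have inE: "\<And>s j. s \<in> PP \<Longrightarrow> j < length s \<Longrightarrow> agc w' s j \<Longrightarrow> (vt (take j s), s ! j) \<in> E j"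
  proof -
    fix s j assume s: "s \<in> PP" "j < length s" "agc w' s j"
    have inH: "(vt (take j s), s ! j) \<in> H" unfolding H_def path_edges_def using s by blast
    have "layer (vt (take j s)) = j" using vt_layer[of "take j s"] PP_len[OF s(1)] s(2) by simp
    then show "(vt (take j s), s ! j) \<in> E j" using inH s(3) unfolding E_def AG_def agc_def by simp
  qed
  have zPP: "z \<in> PP" using PP_def by simp
  have E1: "E j \<noteq> {}" if j: "j < n" for j
  proof (cases "\<exists>q\<in>P0. j < length q \<and> agc w q j")
    case True
    then obtain q where q: "q \<in> P0" "j < length q" "agc w q j" by blast
    then show ?thesis using inE[of q j] gain[OF q] PP_def by blast
  next
    case False
    then have "w' ! j = c ! j" by (subst w'n[OF j]) (rule if_not_P)
    then have "agc w' z j" using zc_nth[OF j] unfolding agc_def by simp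
    then show ?thesis using inE[OF zPP] zl j by blast
  qed
  have E2: "card (E j) \<ge> 2" if j: "j < n" and mj: "Suc j \<in> Multi w" for j
  proof -
    obtain p p' where pp: "length p = Suc j" "length p' = Suc j" "close w p" "close w p'" "vt p \<noteq> vt p'"
      using mj unfolding Multi_def by blast
    have pCP: "p \<in> CP" "p' \<in> CP" using pp j CP_def by auto
    define q where "q = best w (Suc j) (vt p)"
    define q' where "q' = best w (Suc j) (vt p')"
    have qP1: "q \<in> P0" unfolding P0_def q_def using pCP(1) pp(1) by (intro image_eqI[where x=p]) auto
    have qP2: "q' \<in> P0" unfolding P0_def q'_def using pCP(2) pp(2) by (intro image_eqI[where x=p']) auto
    note qP = qP1 qP2
    have rq: "vt p \<in> R (Suc j)" "vt p' \<in> R (Suc j)" using pp unfolding R_def by auto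
    have ql: "length q = Suc j" "vt q = vt p" "length q' = Suc j" "vt q' = vt p'"
      using best_props[OF rq(1), of w] best_props[OF rq(2), of w] q_def q'_def by auto
    have qc: "close w q" "close w q'" using qP P0_props by auto
    have ag: "agc w' q j" "agc w' q' j"
      using close_last[OF qc(1)] close_last[OF qc(2)] ql gain[OF qP(1)] gain[OF qP(2)] by auto
    have in1: "(vt (take j q), q ! j) \<in> E j" using inE[of q j] ag ql qP PP_def by simp
    have in2: "(vt (take j q'), q' ! j) \<in> E j" using inE[of q' j] ag ql qP PP_def by simp
    have "delta (vt (take j q)) (q ! j) = vt q" using vtx_take_Suc[of j q r0 delta] ql by simp
    moreover have "delta (vt (take j q')) (q' ! j) = vt q'" using vtx_take_Suc[of j q' r0 delta] ql by simp
    ultimately have ne: "(vt (take j q), q ! j) \<noteq> (vt (take j q'), q' ! j)" using ql pp(5) by auto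
    have fE: "finite (E j)" using finAG E_def by simp
    have "card {(vt (take j q), q ! j), (vt (take j q'), q' ! j)} \<le> card (E j)"
      by (rule card_mono[OF fE]) (use in1 in2 in auto)
    then show ?thesis using ne by simp
  qed
  define MJ where "MJ = {j. j < n \<and> Suc j \<in> Multi w}"
  have cardMJ: "card MJ = card (Multi w)"
  proof -
    have "Multi w = Suc ` MJ"
    proof (rule set_eqI, rule iffI)
      fix i assume i: "i \<in> Multi w"
      then have "i \<ge> 1" "i \<le> n" by (auto simp: Multi_def)
      then show "i \<in> Suc ` MJ" unfolding MJ_def using i by (intro image_eqI[where x="i - 1"]) auto
    next
      fix i assume "i \<in> Suc ` MJ"
      then show "i \<in> Multi w" unfolding MJ_def by auto
    qed
    then show ?thesis by (simp add: card_image)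
  qed
  have finE: "\<And>j. finite (E j)" using finAG E_def by simp
  have "(\<Sum>j<n. card (E j)) \<ge> (\<Sum>j<n. 1 + (if j \<in> MJ then 1 else 0))"
  proof (rule sum_mono)
    fix j assume "j \<in> {..<n}"
    then show "1 + (if j \<in> MJ then 1 else 0) \<le> card (E j)"
      using E1[of j] E2[of j] finE[of j] MJ_def by (auto simp: card_gt_0_iff Suc_le_eq)
  qed
  moreover have "(\<Sum>j<n. 1 + (if j \<in> MJ then 1 else 0)) = n + card MJ"
  proof -
    have "(\<Sum>j<n. (if j \<in> MJ then 1 else 0)) = card ({..<n} \<inter> MJ)"
      using sum.inter_restrict[of "{..<n}" "\<lambda>_. (1::nat)" MJ] by simp
    moreover have "{..<n} \<inter> MJ = MJ" using MJ_def by auto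
    moreover have "(\<Sum>j<n. 1 + (if j \<in> MJ then 1 else 0)) = (\<Sum>j<n. (1::nat)) + (\<Sum>j<n. (if j \<in> MJ then 1 else 0))"
      by (rule sum.distrib)
    ultimately show ?thesis by simp
  qed
  moreover have "(\<Sum>j<n. card (E j)) = card (\<Union>j<n. E j)"
    by (rule card_UN_disjoint[symmetric]) (use finE in \<open>auto simp: E_def\<close>)
  moreover have "card (\<Union>j<n. E j) \<le> card AG"
    by (rule card_mono[OF finAG]) (auto simp: E_def)
  ultimately have "n + card (Multi w) \<le> agr layer C w' H"
    using cardMJ unfolding agr_def AG_def by simp
  then have "real n + real (card (Multi w)) \<le> (1 + eps) * real n" using upper by linarith
  then show ?thesis by (simp add: algebra_simps)
qed

definition Far :: "'b list \<Rightarrow> 'a list \<Rightarrow> nat set" where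
  "Far w x = {i \<in> {1..n}. agc w x (i - 1) \<and> \<not> close w (take i x)}"

lemma far_bound:
  assumes lx: "length x = n"
  shows "i \<le> n \<Longrightarrow> real (card (Far w x \<inter> {1..i})) \<le> eps * real i"
proof (induction i rule: less_induct)
  case (less i)
  show ?case
  proof (cases "i = 0")
    case True then show ?thesis by simp
  next
    case False
    have finF: "\<And>k. finite (Far w x \<inter> {1..k})" by simp
    show ?thesis
    proof (cases "close w (take i x)")
      case True
      then have iF: "i \<notin> Far w x" by (simp add: Far_def)
      have "{1..i} = insert i {1..i-1}" using False by auto
      then have "Far w x \<inter> {1..i} = Far w x \<inter> {1..i-1}" using iF by auto
      moreover have "real (card (Far w x \<inter> {1..i-1})) \<le> eps * real (i - 1)"
        using less.IH[of "i - 1"] less.prems False by simp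
      moreover have "eps * real (i - 1) \<le> eps * real i" using eps_pos by (simp add: mult_left_mono)
      ultimately show ?thesis by simp
    next
      case nc: False
      have lt: "length (take i x) = i" using less.prems lx by simp
      obtain k where k: "k < i" "\<not> (real (A w (take i x) k i) > eps * real (i - k))"
        using nc unfolding close_def lt by blast
      have "A w (take i x) k i = A w x k i" by (rule A_cong) (simp add: agc_cong_take)
      then have Ak: "real (A w x k i) \<le> eps * real (i - k)" using k by simp
      have sub: "Far w x \<inter> {1..i} \<subseteq> (Far w x \<inter> {1..k}) \<union> Suc ` {l. k \<le> l \<and> l < i \<and> agc w x l}"
      proof
        fix j assume j: "j \<in> Far w x \<inter> {1..i}"
        show "j \<in> (Far w x \<inter> {1..k}) \<union> Suc ` {l. k \<le> l \<and> l < i \<and> agc w x l}"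
        proof (cases "j \<le> k")
          case True then show ?thesis using j by auto
        next
          case False
          then have "j - 1 \<in> {l. k \<le> l \<and> l < i \<and> agc w x l}" using j unfolding Far_def by auto
          moreover have "j = Suc (j - 1)" using False by simp
          ultimately show ?thesis by blast
        qed
      qed
      have fin2: "finite {l. k \<le> l \<and> l < i \<and> agc w x l}" by (rule finite_subset[of _ "{..<i}"]) auto
      have "card (Far w x \<inter> {1..i}) \<le> card ((Far w x \<inter> {1..k}) \<union> Suc ` {l. k \<le> l \<and> l < i \<and> agc w x l})"
        by (rule card_mono[OF _ sub]) (use fin2 in simp)
      also have "\<dots> \<le> card (Far w x \<inter> {1..k}) + card (Suc ` {l. k \<le> l \<and> l < i \<and> agc w x l})"
        by (rule card_Un_le)
      also have "card (Suc ` {l. k \<le> l \<and> l < i \<and> agc w x l}) = A w x k i"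
        unfolding A_def by (simp add: card_image)
      finally have "real (card (Far w x \<inter> {1..i})) \<le> real (card (Far w x \<inter> {1..k})) + real (A w x k i)"
        by linarith
      moreover have "real (card (Far w x \<inter> {1..k})) \<le> eps * real k" using less k less.prems by simp
      moreover have "eps * real k + eps * real (i - k) = eps * real i" using k by (simp add: of_nat_diff algebra_simps)
      ultimately show ?thesis using Ak by linarith
    qed
  qed
qed

lemma main_bound:
  assumes sens: "sensitive eps n layer r0 delta C" and lx: "length x = n" and lw: "length w = n"
  shows "real (card {i \<in> {i \<in> {1..n}. code_str r0 delta C x ! (i - 1) = w ! (i - 1)}.
                 CDec eps r0 delta C (take i w) \<noteq> Some (vtx r0 delta (take i x))})
           \<le> 2 * eps * real n"
proof -
  let ?B = "{i \<in> {i \<in> {1..n}. code_str r0 delta C x ! (i - 1) = w ! (i - 1)}.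
                 CDec eps r0 delta C (take i w) \<noteq> Some (vtx r0 delta (take i x))}"
  have sub: "?B \<subseteq> Far w x \<union> Multi w"
  proof
    fix i assume iB: "i \<in> ?B"
    then have i1: "1 \<le> i" "i \<le> n" and cs: "code_str r0 delta C x ! (i - 1) = w ! (i - 1)"
      and cd: "CDec eps r0 delta C (take i w) \<noteq> Some (vt (take i x))" by auto
    have ag: "agc w x (i - 1)" using cs i1 lx unfolding agc_def code_str_def by simp
    show "i \<in> Far w x \<union> Multi w"
    proof (cases "close w (take i x)")
      case False
      then show ?thesis using ag i1 unfolding Far_def by auto
    next
      case True
      define SS where "SS = {vt p | p. length p = i \<and> close w p}"
      have ltw: "length (take i w) = i" using i1 lw by simp
      have S_eq: "{vtx r0 delta p | p. length p = length (take i w) \<and> sfx_dist (code_str r0 delta C p) (take i w) < 1 - eps} = SS"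
      proof -
        have "sfx_dist (code_str r0 delta C p) (take i w) < 1 - eps \<longleftrightarrow> close w p" if lp: "length p = i" for p
          using close_iff[of p w] lw i1 lp by simp
        then show ?thesis unfolding SS_def ltw by blast
      qed
      have cdec: "CDec eps r0 delta C (take i w) = (if \<exists>!v. v \<in> SS then Some (THE v. v \<in> SS) else None)"
        unfolding CDec_def Let_def S_eq by simp
      have lt0: "length (take i x) = i" using i1 lx by simp
      have vS: "vt (take i x) \<in> SS" unfolding SS_def using True lt0 by blast
      have "\<exists>u\<in>SS. u \<noteq> vt (take i x)"
      proof (rule ccontr)
        assume "\<not> (\<exists>u\<in>SS. u \<noteq> vt (take i x))"
        then have all: "\<And>u. u \<in> SS \<Longrightarrow> u = vt (take i x)" by blast
        have ex1: "\<exists>!v. v \<in> SS" by (rule ex1I[of _ "vt (take i x)"]) (use vS all in blast)+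
        have th: "(THE v. v \<in> SS) = vt (take i x)" by (rule the_equality) (use vS all in blast)+
        have "CDec eps r0 delta C (take i w) = Some (THE v. v \<in> SS)" by (subst cdec) (rule if_P[OF ex1])
        then have "CDec eps r0 delta C (take i w) = Some (vt (take i x))" by (simp only: th)
        then show False using cd by contradiction
      qed
      then obtain p' where p': "length p' = i" "close w p'" "vt p' \<noteq> vt (take i x)" unfolding SS_def by auto
      have lt: "length (take i x) = i" using i1 lx by simp
      have "\<exists>p p'. length p = i \<and> length p' = i \<and> close w p \<and> close w p' \<and> vt p \<noteq> vt p'"
        apply (rule exI[of _ "take i x"])
        apply (rule exI[of _ p'])
        using lt p' True by auto
      then show ?thesis unfolding Multi_def using i1 by simp
    qed
  qed
  have f1: "Far w x \<subseteq> {1..n}" unfolding Far_def by blast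
  have f2: "Multi w \<subseteq> {1..n}" unfolding Multi_def by blast
  have "finite (Far w x \<union> Multi w)" using finite_subset[OF f1] finite_subset[OF f2] by simp
  then have "card ?B \<le> card (Far w x \<union> Multi w)" by (rule card_mono[OF _ sub])
  also have "\<dots> \<le> card (Far w x) + card (Multi w)" by (rule card_Un_le)
  finally have "real (card ?B) \<le> real (card (Far w x)) + real (card (Multi w))" by linarith
  moreover have "real (card (Far w x)) \<le> eps * real n"
  proof -
    have "Far w x \<inter> {1..n} = Far w x" using f1 by blast
    then show ?thesis using far_bound[OF lx, of n w] by simp
  qed
  moreover have "real (card (Multi w)) \<le> eps * real n" by (rule multi_bound[OF sens lw])
  ultimately show ?thesis by linarith
qed

end

theorem theorem5p11:
  fixes eps :: real and n :: nat
    and V :: "'v set" and layer :: "'v \<Rightarrow> nat" and r0 :: 'v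
    and delta :: "'v \<Rightarrow> 'a::finite \<Rightarrow> 'v"
    and C :: "'v \<Rightarrow> 'a \<Rightarrow> 'b::finite"
    and x :: "'a list" and w :: "'b list"
  assumes "0 < eps"
    and "layered_graph n V layer r0 delta"
    and "sensitive eps n layer r0 delta C"
    and "length x = n" and "length w = n"
  shows "real (card {i \<in> {i \<in> {1..n}. code_str r0 delta C x ! (i - 1) = w ! (i - 1)}.
                 CDec eps r0 delta C (take i w) \<noteq> Some (vtx r0 delta (take i x))})
           \<le> 2 * eps * real n"
proof (cases "eps < 1")
  case True
  interpret lg n V layer r0 delta C eps using assms True by unfold_locales auto
  show ?thesis using main_bound assms by blast
next
  case False
  let ?B = "{i \<in> {i \<in> {1..n}. code_str r0 delta C x ! (i - 1) = w ! (i - 1)}.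
                 CDec eps r0 delta C (take i w) \<noteq> Some (vtx r0 delta (take i x))}"
  have "card ?B \<le> card {1..n}" by (rule card_mono) auto
  then have "real (card ?B) \<le> real n" by simp
  moreover have "real n \<le> 2 * eps * real n" using False by (simp add: mult_le_cancel_right1)
  ultimately show ?thesis by linarith
qed

end
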